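(* Every partial field is global: if $F$ is a partial field, then $F$ is isomorphic to $\Gamma(\mathrm{Spec}(F))=\mathcal{O}_X(X)$ where $(X,\mathcal{O}_X)=\mathrm{Spec}(F)$.
   Context: A partial ring is a set with $0$, a set of summable pairs and a commutative, unital, associative (in the sense: $(a,b),(a+b,c)$ summable iff $(b,c),(a,b+c)$ summable, and then $(a+b)+c=a+(b+c)$) partial addition, together with a commutative associative multiplication with unit $1$ such that $0\cdot a=0$ and multiplication distributes over summable pairs (if $(a_1,a_2)$ is summable then so is $(a_1x,a_2x)$ and $(a_1+a_2)x=a_1x+a_2x$). A partial field is a partial ring in which every nonzero element has a multiplicative inverse. For a partial ring $A$, $X_A$ is the set of prime ideals with the topology generated by $D(a)=\{\mathfrak p: a\notin\mathfrak p\}$; for open $U$, $S_U=\{a: a\notin\mathfrak p\ \forall \mathfrak p\in U\}$, and $\mathcal{O}_X$ is the sheafification of $U\mapsto S_U^{-1}A$ (localization: classes $a/s$ with $a/s=b/t$ iff $uta=usb$ for some $u\in S_U$). $\mathrm{Spec}(A)=(X_A,\mathcal{O}_X)$. A partial ring is global if it is isomorphic to $\Gamma(X,\mathcal{O})=\mathcal{O}(X)$ for some affine partial scheme $(X,\mathcal{O})$, i.e. a locally partial-ringed space isomorphic to $\mathrm{Spec}(A)$ for some partial ring $A$. *)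

theory Defs
  imports Main
begin

record 'a pring =
  pcarrier :: "'a set"
  pzero :: 'a
  pone :: 'a
  psummable :: "'a \<Rightarrow> 'a \<Rightarrow> bool"
  padd :: "'a \<Rightarrow> 'a \<Rightarrow> 'a"
  pmult :: "'a \<Rightarrow> 'a \<Rightarrow> 'a"

definition partial_ring :: "('a, 'b) pring_scheme \<Rightarrow> bool" where
  "partial_ring A \<longleftrightarrow>
     (let C = pcarrier A; sm = psummable A; ad = padd A; mu = pmult A; z = pzero A; e = pone A in
      z \<in> C \<and> e \<in> C
    \<and> (\<forall>a b. sm a b \<longrightarrow> a \<in> C \<and> b \<in> C \<and> ad a b \<in> C)
    \<and> (\<forall>a b. sm a b \<longrightarrow> sm b a \<and> ad a b = ad b a)
    \<and> (\<forall>a\<in>C. sm a z \<and> ad a z = a)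
    \<and> (\<forall>a\<in>C. \<forall>b\<in>C. \<forall>c\<in>C.
          ((sm a b \<and> sm (ad a b) c) \<longleftrightarrow> (sm b c \<and> sm a (ad b c)))
        \<and> (sm a b \<and> sm (ad a b) c \<longrightarrow> ad (ad a b) c = ad a (ad b c)))
    \<and> (\<forall>a\<in>C. \<forall>b\<in>C. mu a b \<in> C \<and> mu a b = mu b a)
    \<and> (\<forall>a\<in>C. \<forall>b\<in>C. \<forall>c\<in>C. mu (mu a b) c = mu a (mu b c))
    \<and> (\<forall>a\<in>C. mu a e = a)
    \<and> (\<forall>a\<in>C. mu z a = z)
    \<and> (\<forall>a1 a2 x. sm a1 a2 \<longrightarrow> x \<in> C \<longrightarrow>
          sm (mu a1 x) (mu a2 x) \<and> mu (ad a1 a2) x = ad (mu a1 x) (mu a2 x)))"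

definition partial_field :: "('a, 'b) pring_scheme \<Rightarrow> bool" where
  "partial_field A \<longleftrightarrow> partial_ring A \<and>
     (\<forall>a\<in>pcarrier A. a \<noteq> pzero A \<longrightarrow> (\<exists>b\<in>pcarrier A. pmult A a b = pone A))"

definition pring_iso :: "('a, 'c) pring_scheme \<Rightarrow> ('b, 'd) pring_scheme \<Rightarrow> ('a \<Rightarrow> 'b) \<Rightarrow> bool" where
  "pring_iso A B f \<longleftrightarrow>
     bij_betw f (pcarrier A) (pcarrier B)
   \<and> f (pzero A) = pzero B \<and> f (pone A) = pone B
   \<and> (\<forall>a\<in>pcarrier A. \<forall>b\<in>pcarrier A. psummable B (f a) (f b) \<longleftrightarrow> psummable A a b)
   \<and> (\<forall>a b. psummable A a b \<longrightarrow> f (padd A a b) = padd B (f a) (f b))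
   \<and> (\<forall>a\<in>pcarrier A. \<forall>b\<in>pcarrier A. f (pmult A a b) = pmult B (f a) (f b))"

definition pring_isomorphic :: "('a, 'c) pring_scheme \<Rightarrow> ('b, 'd) pring_scheme \<Rightarrow> bool" where
  "pring_isomorphic A B \<longleftrightarrow> (\<exists>f. pring_iso A B f)"

definition pideal :: "('a, 'b) pring_scheme \<Rightarrow> 'a set \<Rightarrow> bool" where
  "pideal A I \<longleftrightarrow> I \<subseteq> pcarrier A \<and> pzero A \<in> I
     \<and> (\<forall>a b. psummable A a b \<longrightarrow> a \<in> I \<longrightarrow> b \<in> I \<longrightarrow> padd A a b \<in> I)
     \<and> (\<forall>a\<in>pcarrier A. \<forall>b\<in>I. pmult A a b \<in> I)"

definition prime_pideal :: "('a, 'b) pring_scheme \<Rightarrow> 'a set \<Rightarrow> bool" where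
  "prime_pideal A P \<longleftrightarrow> pideal A P \<and> P \<noteq> pcarrier A
     \<and> (\<forall>a\<in>pcarrier A. \<forall>b\<in>pcarrier A. pmult A a b \<in> P \<longrightarrow> a \<in> P \<or> b \<in> P)"

definition spec_pts :: "('a, 'b) pring_scheme \<Rightarrow> 'a set set" where
  "spec_pts A = {P. prime_pideal A P}"

definition basicD :: "('a, 'b) pring_scheme \<Rightarrow> 'a \<Rightarrow> 'a set set" where
  "basicD A a = {P \<in> spec_pts A. a \<notin> P}"

inductive spec_open :: "('a, 'b) pring_scheme \<Rightarrow> 'a set set \<Rightarrow> bool" for A where
  whole: "spec_open A (spec_pts A)"
| basic: "a \<in> pcarrier A \<Longrightarrow> spec_open A (basicD A a)"
| inter: "spec_open A U \<Longrightarrow> spec_open A V \<Longrightarrow> spec_open A (U \<inter> V)"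
| union: "(\<And>U. U \<in> K \<Longrightarrow> spec_open A U) \<Longrightarrow> spec_open A (\<Union>K)"

definition mult_set :: "('a, 'b) pring_scheme \<Rightarrow> 'a set set \<Rightarrow> 'a set" where
  "mult_set A U = {a \<in> pcarrier A. \<forall>P\<in>U. a \<notin> P}"

definition frac_cls :: "('a, 'b) pring_scheme \<Rightarrow> 'a set \<Rightarrow> 'a \<Rightarrow> 'a \<Rightarrow> ('a \<times> 'a) set" where
  "frac_cls A S a s = {(b, t). b \<in> pcarrier A \<and> t \<in> S \<and>
      (\<exists>u\<in>S. pmult A u (pmult A t a) = pmult A u (pmult A s b))}"

definition loc_carrier :: "('a, 'b) pring_scheme \<Rightarrow> 'a set \<Rightarrow> ('a \<times> 'a) set set" where
  "loc_carrier A S = {frac_cls A S a s | a s. a \<in> pcarrier A \<and> s \<in> S}"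

definition loc_mult :: "('a, 'b) pring_scheme \<Rightarrow> 'a set \<Rightarrow> ('a \<times> 'a) set \<Rightarrow> ('a \<times> 'a) set \<Rightarrow> ('a \<times> 'a) set" where
  "loc_mult A S x y = \<Union>{frac_cls A S (pmult A a b) (pmult A s t) | a s b t. (a, s) \<in> x \<and> (b, t) \<in> y}"

definition loc_summable :: "('a, 'b) pring_scheme \<Rightarrow> 'a set \<Rightarrow> ('a \<times> 'a) set \<Rightarrow> ('a \<times> 'a) set \<Rightarrow> bool" where
  "loc_summable A S x y \<longleftrightarrow> x \<in> loc_carrier A S \<and> y \<in> loc_carrier A S \<and>
     (\<exists>a b u. (a, u) \<in> x \<and> (b, u) \<in> y \<and> psummable A a b)"

definition loc_add :: "('a, 'b) pring_scheme \<Rightarrow> 'a set \<Rightarrow> ('a \<times> 'a) set \<Rightarrow> ('a \<times> 'a) set \<Rightarrow> ('a \<times> 'a) set" where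
  "loc_add A S x y = \<Union>{frac_cls A S (padd A a b) u | a b u. (a, u) \<in> x \<and> (b, u) \<in> y \<and> psummable A a b}"

section \<open>The presheaf U \<mapsto> S_U^{-1} A, its stalks and its sheafification\<close>

abbreviation sec :: "('a, 'b) pring_scheme \<Rightarrow> 'a set set \<Rightarrow> ('a \<times> 'a) set set" where
  "sec A U \<equiv> loc_carrier A (mult_set A U)"

text \<open>Restriction to a smaller open W (note S_U \<subseteq> S_W): a/s \<mapsto> a/s.\<close>
definition res :: "('a, 'b) pring_scheme \<Rightarrow> 'a set set \<Rightarrow> ('a \<times> 'a) set \<Rightarrow> ('a \<times> 'a) set" where
  "res A W x = \<Union>{frac_cls A (mult_set A W) a s | a s. (a, s) \<in> x}"

type_synonym 'a germ = "('a set set \<times> ('a \<times> 'a) set) set"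

text \<open>Germ at P of a section x over an open neighbourhood U of P (element of the colimit).\<close>
definition germ :: "('a, 'b) pring_scheme \<Rightarrow> 'a set \<Rightarrow> 'a set set \<Rightarrow> ('a \<times> 'a) set \<Rightarrow> 'a germ" where
  "germ A P U x = {(V, y). spec_open A V \<and> P \<in> V \<and> y \<in> sec A V \<and>
      (\<exists>W. spec_open A W \<and> P \<in> W \<and> W \<subseteq> U \<inter> V \<and> res A W x = res A W y)}"

definition stalk :: "('a, 'b) pring_scheme \<Rightarrow> 'a set \<Rightarrow> 'a germ set" where
  "stalk A P = {germ A P U x | U x. spec_open A U \<and> P \<in> U \<and> x \<in> sec A U}"

definition germ_mult :: "('a, 'b) pring_scheme \<Rightarrow> 'a set \<Rightarrow> 'a germ \<Rightarrow> 'a germ \<Rightarrow> 'a germ" where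
  "germ_mult A P g h = \<Union>{germ A P W (loc_mult A (mult_set A W) x y) | W x y.
      spec_open A W \<and> P \<in> W \<and> (W, x) \<in> g \<and> (W, y) \<in> h}"

definition germ_summable :: "('a, 'b) pring_scheme \<Rightarrow> 'a set \<Rightarrow> 'a germ \<Rightarrow> 'a germ \<Rightarrow> bool" where
  "germ_summable A P g h \<longleftrightarrow> g \<in> stalk A P \<and> h \<in> stalk A P \<and>
     (\<exists>W x y. spec_open A W \<and> P \<in> W \<and> (W, x) \<in> g \<and> (W, y) \<in> h \<and>
        loc_summable A (mult_set A W) x y)"

definition germ_add :: "('a, 'b) pring_scheme \<Rightarrow> 'a set \<Rightarrow> 'a germ \<Rightarrow> 'a germ \<Rightarrow> 'a germ" where
  "germ_add A P g h = \<Union>{germ A P W (loc_add A (mult_set A W) x y) | W x y.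
      spec_open A W \<and> P \<in> W \<and> (W, x) \<in> g \<and> (W, y) \<in> h \<and>
      loc_summable A (mult_set A W) x y}"

text \<open>Global sections of the sheafification O_X: (extensional) functions on X assigning to
  each point a germ, locally given by a section of the presheaf.\<close>
definition gamma_carrier :: "('a, 'b) pring_scheme \<Rightarrow> ('a set \<Rightarrow> 'a germ) set" where
  "gamma_carrier A = {\<sigma>. (\<forall>P. P \<notin> spec_pts A \<longrightarrow> \<sigma> P = undefined) \<and>
     (\<forall>P\<in>spec_pts A. \<exists>U x. spec_open A U \<and> P \<in> U \<and> x \<in> sec A U \<and>
        (\<forall>Q\<in>U. \<sigma> Q = germ A Q U x))}"

definition gamma_const :: "('a, 'b) pring_scheme \<Rightarrow> 'a \<Rightarrow> ('a set \<Rightarrow> 'a germ)" where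
  "gamma_const A a = (\<lambda>P. if P \<in> spec_pts A
       then germ A P (spec_pts A) (frac_cls A (mult_set A (spec_pts A)) a (pone A))
       else undefined)"

definition Gamma_Spec :: "('a, 'b) pring_scheme \<Rightarrow> ('a set \<Rightarrow> 'a germ) pring" where
  "Gamma_Spec A = \<lparr>
     pcarrier = gamma_carrier A,
     pzero = gamma_const A (pzero A),
     pone = gamma_const A (pone A),
     psummable = (\<lambda>\<sigma> \<tau>. \<sigma> \<in> gamma_carrier A \<and> \<tau> \<in> gamma_carrier A \<and>
                       (\<forall>P\<in>spec_pts A. germ_summable A P (\<sigma> P) (\<tau> P))),
     padd = (\<lambda>\<sigma> \<tau> P. if P \<in> spec_pts A then germ_add A P (\<sigma> P) (\<tau> P) else undefined),
     pmult = (\<lambda>\<sigma> \<tau> P. if P \<in> spec_pts A then germ_mult A P (\<sigma> P) (\<tau> P) else undefined) \<rparr>"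

end

theory Submission
  imports Defs
begin

locale pfld =
  fixes F :: "('a, 'b) pring_scheme"
  assumes pf: "partial_field F"
begin

abbreviation "C \<equiv> pcarrier F"
abbreviation "z \<equiv> pzero F"
abbreviation "e \<equiv> pone F"
abbreviation "mu \<equiv> pmult F"
abbreviation "sm \<equiv> psummable F"
abbreviation "ad \<equiv> padd F"

lemma pr: "partial_ring F" using pf unfolding partial_field_def by blast

lemma prd:
  "z \<in> C" "e \<in> C"
  "\<forall>a b. sm a b \<longrightarrow> a \<in> C \<and> b \<in> C \<and> ad a b \<in> C"
  "\<forall>a b. sm a b \<longrightarrow> sm b a \<and> ad a b = ad b a"
  "\<forall>a\<in>C. sm a z \<and> ad a z = a"
  "\<forall>a\<in>C. \<forall>b\<in>C. \<forall>c\<in>C.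
          ((sm a b \<and> sm (ad a b) c) \<longleftrightarrow> (sm b c \<and> sm a (ad b c)))
        \<and> (sm a b \<and> sm (ad a b) c \<longrightarrow> ad (ad a b) c = ad a (ad b c))"
  "\<forall>a\<in>C. \<forall>b\<in>C. mu a b \<in> C \<and> mu a b = mu b a"
  "\<forall>a\<in>C. \<forall>b\<in>C. \<forall>c\<in>C. mu (mu a b) c = mu a (mu b c)"
  "\<forall>a\<in>C. mu a e = a"
  "\<forall>a\<in>C. mu z a = z"
  "\<forall>a1 a2 x. sm a1 a2 \<longrightarrow> x \<in> C \<longrightarrow>
          sm (mu a1 x) (mu a2 x) \<and> mu (ad a1 a2) x = ad (mu a1 x) (mu a2 x)"
  using pr unfolding partial_ring_def Let_def by - (elim conjE, assumption)+

lemma zC: "z \<in> C" and eC: "e \<in> C" using prd by auto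

lemma smC: "sm a b \<Longrightarrow> a \<in> C \<and> b \<in> C \<and> ad a b \<in> C"
  using prd(3) by blast

lemma smz: "a \<in> C \<Longrightarrow> sm a z" "a \<in> C \<Longrightarrow> ad a z = a"
  using prd(5) by blast+

lemma mC: "a \<in> C \<Longrightarrow> b \<in> C \<Longrightarrow> mu a b \<in> C"
  and mcomm: "a \<in> C \<Longrightarrow> b \<in> C \<Longrightarrow> mu a b = mu b a"
  using prd(7) by blast+

lemma massoc: "a \<in> C \<Longrightarrow> b \<in> C \<Longrightarrow> c \<in> C \<Longrightarrow> mu (mu a b) c = mu a (mu b c)"
  using prd(8) by blast

lemma me: "a \<in> C \<Longrightarrow> mu a e = a" and zm: "a \<in> C \<Longrightarrow> mu z a = z"
  using prd(9,10) by blast+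

lemma em: "a \<in> C \<Longrightarrow> mu e a = a" using me[of a] mcomm[OF eC, of a] by simp
lemma mz: "a \<in> C \<Longrightarrow> mu a z = z" using zm[of a] mcomm[OF zC, of a] by simp

lemma lcomm: "a \<in> C \<Longrightarrow> b \<in> C \<Longrightarrow> c \<in> C \<Longrightarrow> mu a (mu b c) = mu b (mu a c)"
proof -
  assume h: "a \<in> C" "b \<in> C" "c \<in> C"
  have "mu a (mu b c) = mu (mu a b) c" using massoc[OF h] by simp
  also have "\<dots> = mu (mu b a) c" using mcomm[of a b] h by simp
  also have "\<dots> = mu b (mu a c)" using massoc[of b a c] h by simp
  finally show ?thesis .
qed


lemma distr: "sm a1 a2 \<Longrightarrow> x \<in> C \<Longrightarrow> sm (mu a1 x) (mu a2 x) \<and> mu (ad a1 a2) x = ad (mu a1 x) (mu a2 x)"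
  using prd(11) by blast

lemma inv: "a \<in> C \<Longrightarrow> a \<noteq> z \<Longrightarrow> \<exists>b\<in>C. mu a b = e"
  using pf unfolding partial_field_def by blast

lemma inv2: "a \<in> C \<Longrightarrow> a \<noteq> z \<Longrightarrow> \<exists>b\<in>C. mu b a = e"
proof -
  assume h: "a \<in> C" "a \<noteq> z"
  then obtain b where b: "b \<in> C" "mu a b = e" using inv by blast
  thus ?thesis using mcomm[of a b] h by auto
qed

lemma degen: "e = z \<Longrightarrow> C = {z}"
  using me mz zC by fastforce

lemma nzd: "a \<in> C \<Longrightarrow> b \<in> C \<Longrightarrow> mu a b = z \<Longrightarrow> a = z \<or> b = z"
proof (rule ccontr)
  assume a: "a \<in> C" "b \<in> C" "mu a b = z" "\<not> (a = z \<or> b = z)"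
  then obtain c where c: "c \<in> C" "mu c a = e" using inv2 by blast
  have "b = mu (mu c a) b" using c a em by simp
  also have "\<dots> = mu c (mu a b)" using massoc[of c a b] a c by blast
  also have "\<dots> = z" using a c mz by simp
  finally show False using a by simp
qed

lemma cancel: "s \<in> C \<Longrightarrow> s \<noteq> z \<Longrightarrow> x \<in> C \<Longrightarrow> y \<in> C \<Longrightarrow> mu s x = mu s y \<Longrightarrow> x = y"
proof -
  assume a: "s \<in> C" "s \<noteq> z" "x \<in> C" "y \<in> C" "mu s x = mu s y"
  then obtain c where c: "c \<in> C" "mu c s = e" using inv2 by blast
  have "x = mu (mu c s) x" using c a em by simp
  also have "\<dots> = mu c (mu s x)" using massoc[of c s x] a c by simp
  also have "\<dots> = mu c (mu s y)" using a by simp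
  also have "\<dots> = mu (mu c s) y" using massoc[of c s y] a c by simp
  finally show "x = y" using c a em by simp
qed

definition "S = {a \<in> C. a \<noteq> z}"
definition "P0 = {z}"
definition "X = {P0}"
definition "cl a = frac_cls F S a e"

lemma spec_sub: "spec_open F V \<Longrightarrow> V \<subseteq> spec_pts F"
  by (induction rule: spec_open.induct) (auto simp: basicD_def)

end

locale pfld1 = pfld +
  assumes nd: "e \<noteq> z"
begin

lemma eS: "e \<in> S" using eC nd by (simp add: S_def)

lemma SC: "s \<in> S \<Longrightarrow> s \<in> C" by (simp add: S_def)

lemma mS: "s \<in> S \<Longrightarrow> t \<in> S \<Longrightarrow> mu s t \<in> S"
  using nzd mC by (auto simp: S_def)

lemma invS: "s \<in> S \<Longrightarrow> \<exists>s'\<in>C. mu s s' = e"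
  using inv by (auto simp: S_def)

lemma spec_pts_eq: "spec_pts F = X"
proof -
  have "prime_pideal F P \<longleftrightarrow> P = P0" for P
  proof
    assume P: "prime_pideal F P"
    hence id: "pideal F P" "P \<noteq> C" by (auto simp: prime_pideal_def)
    have "P \<subseteq> {z}"
    proof
      fix a assume aP: "a \<in> P"
      show "a \<in> {z}"
      proof (rule ccontr)
        assume "a \<notin> {z}"
        moreover have aC: "a \<in> C" using aP id unfolding pideal_def by blast
        ultimately obtain b where b: "b \<in> C" "mu b a = e" using inv2 by blast
        hence "mu b a \<in> P" using id aP unfolding pideal_def by blast
        hence "e \<in> P" using b by simp
        hence "mu c e \<in> P" if "c \<in> C" for c using id that unfolding pideal_def by blast
        hence "C \<subseteq> P" using me by auto
        thus False using id unfolding pideal_def by blast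
      qed
    qed
    moreover have "z \<in> P" using id unfolding pideal_def by blast
    ultimately show "P = P0" by (auto simp: P0_def)
  next
    assume P: "P = P0"
    have "pideal F {z}" unfolding pideal_def
      using zC smz mz by auto
    moreover have "{z} \<noteq> C" using eC nd by auto
    moreover have "\<forall>a\<in>C. \<forall>b\<in>C. mu a b \<in> {z} \<longrightarrow> a \<in> {z} \<or> b \<in> {z}" using nzd by auto
    ultimately show "prime_pideal F P" using P by (simp add: prime_pideal_def P0_def)
  qed
  thus ?thesis by (auto simp: spec_pts_def X_def)
qed

lemma mult_set_X: "mult_set F X = S"
  by (auto simp: mult_set_def X_def P0_def S_def)

lemma fc_char: "a \<in> C \<Longrightarrow> s \<in> S \<Longrightarrow>
   frac_cls F S a s = {(b, t). b \<in> C \<and> t \<in> S \<and> mu t a = mu s b}"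
proof (rule set_eqI, clarify)
  fix b t assume a: "a \<in> C" "s \<in> S"
  show "((b, t) \<in> frac_cls F S a s) = ((b, t) \<in> {(b, t). b \<in> C \<and> t \<in> S \<and> mu t a = mu s b})"
  proof
    assume "(b, t) \<in> frac_cls F S a s"
    then obtain u where u: "b \<in> C" "t \<in> S" "u \<in> S" "mu u (mu t a) = mu u (mu s b)"
      unfolding frac_cls_def by blast
    have "u \<noteq> z" using u(3) by (simp add: S_def)
    moreover have "mu t a \<in> C" "mu s b \<in> C" using SC[OF u(2)] SC[OF a(2)] a(1) u(1) mC by auto
    ultimately have "mu t a = mu s b" using cancel[OF SC[OF u(3)] _ _ _ u(4)] by blast
    thus "(b, t) \<in> {(b, t). b \<in> C \<and> t \<in> S \<and> mu t a = mu s b}" using u by auto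
  next
    assume "(b, t) \<in> {(b, t). b \<in> C \<and> t \<in> S \<and> mu t a = mu s b}"
    thus "(b, t) \<in> frac_cls F S a s" unfolding frac_cls_def using eS em a SC mC by auto
  qed
qed

lemma cl_char: "a \<in> C \<Longrightarrow> (b, t) \<in> cl a \<longleftrightarrow> b \<in> C \<and> t \<in> S \<and> b = mu t a"
  unfolding cl_def using fc_char[OF _ eS] em by auto

lemma fcs1: "s \<in> S \<Longrightarrow> s \<in> C \<and> s \<noteq> z" by (auto simp: S_def)

lemma fcs4: "msc \<in> C \<Longrightarrow> s \<in> S \<Longrightarrow> (b, t) \<in> frac_cls F S msc s \<longleftrightarrow> b \<in> C \<and> t \<in> S \<and> mu t msc = mu s b"
    using fc_char[of msc s] by simp

lemma fc_shift_pt: assumes a: "c \<in> C" "s \<in> S"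
  shows "(b, t) \<in> frac_cls F S (mu s c) s \<longleftrightarrow> (b, t) \<in> cl c"
proof (cases "b \<in> C \<and> t \<in> S")
  case True
  have sC: "s \<in> C" "t \<in> C" "s \<noteq> z" using a True fcs1 by auto
  have eq: "mu t (mu s c) = mu s (mu t c)" using a sC lcomm by blast
  have tc: "mu t c \<in> C" using sC a mC by blast
  have msc: "mu s c \<in> C" using a sC mC by blast
  have imp: "mu s b = mu s (mu t c) \<Longrightarrow> b = mu t c"
    using cancel[of s b "mu t c"] sC True tc by blast
  have H: "mu t (mu s c) = mu s b \<longleftrightarrow> b = mu t c"
  proof
    assume "mu t (mu s c) = mu s b"
    then have "mu s b = mu s (mu t c)" using eq by simp
    thus "b = mu t c" using imp by blast
  next
    assume "b = mu t c" thus "mu t (mu s c) = mu s b" using eq by simp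
  qed
  show ?thesis using fcs4[OF msc a(2), of b t] cl_char[OF a(1), of b t] H True by blast
next
  case False
  have msc: "mu s c \<in> C" using a fcs1 mC by blast
  show ?thesis using fcs4[OF msc a(2), of b t] cl_char[OF a(1), of b t] False by blast
qed

lemma fc_shift: "c \<in> C \<Longrightarrow> s \<in> S \<Longrightarrow> frac_cls F S (mu s c) s = cl c"
  using fc_shift_pt by (auto simp: set_eq_iff)

lemma fc_cl: "a \<in> C \<Longrightarrow> s \<in> S \<Longrightarrow> \<exists>c\<in>C. frac_cls F S a s = cl c"
proof -
  assume a: "a \<in> C" "s \<in> S"
  then obtain s' where s': "s' \<in> C" "mu s s' = e" using invS by blast
  have "mu s (mu s' a) = a" using massoc[of s s' a] s' a SC em by simp
  moreover have "mu s' a \<in> C" using a s' mC by blast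
  ultimately show ?thesis using fc_shift[of "mu s' a" s] a by auto
qed

lemma clin: "a \<in> C \<Longrightarrow> (a, e) \<in> cl a"
  using cl_char eS em by simp

lemma cl_inj: "a \<in> C \<Longrightarrow> b \<in> C \<Longrightarrow> cl a = cl b \<Longrightarrow> a = b"
  using clin[of a] cl_char[of b a e] em[of b] by simp

lemma loc_car: "loc_carrier F S = cl ` C"
proof
  show "loc_carrier F S \<subseteq> cl ` C"
  proof
    fix x assume "x \<in> loc_carrier F S"
    then obtain a s where as: "x = frac_cls F S a s" "a \<in> C" "s \<in> S"
      unfolding loc_carrier_def by blast
    then obtain c where "c \<in> C" "frac_cls F S a s = cl c" using fc_cl by blast
    thus "x \<in> cl ` C" using as by blast
  qed
  show "cl ` C \<subseteq> loc_carrier F S"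
  proof
    fix x assume "x \<in> cl ` C"
    then obtain a where a: "a \<in> C" "x = frac_cls F S a e" unfolding cl_def by blast
    thus "x \<in> loc_carrier F S" unfolding loc_carrier_def using eS by blast
  qed
qed

lemma res_cl: "c \<in> C \<Longrightarrow> res F X (cl c) = cl c"
proof -
  assume c: "c \<in> C"
  have "{frac_cls F (mult_set F X) a s | a s. (a, s) \<in> cl c} = {cl c}"
  proof
    show "{frac_cls F (mult_set F X) a s | a s. (a, s) \<in> cl c} \<subseteq> {cl c}"
    proof clarify
      fix a s assume "(a, s) \<in> cl c"
      hence "s \<in> S" "a = mu s c" using cl_char[OF c] by auto
      thus "frac_cls F (mult_set F X) a s = cl c" using fc_shift[OF c] unfolding mult_set_X by simp
    qed
    have "frac_cls F (mult_set F X) c e = cl c" unfolding mult_set_X cl_def ..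
    thus "{cl c} \<subseteq> {frac_cls F (mult_set F X) a s | a s. (a, s) \<in> cl c}"
      using clin[OF c] by blast
  qed
  thus ?thesis unfolding res_def by simp
qed

lemma open_X: "spec_open F V \<Longrightarrow> P0 \<in> V \<Longrightarrow> V = X"
  using spec_sub spec_pts_eq by (auto simp: X_def)

lemma openX: "spec_open F X"
  using spec_open.whole[of F] spec_pts_eq by simp

lemma germ_cl: "c \<in> C \<Longrightarrow> germ F P0 X (cl c) = {(X, cl c)}"
proof -
  assume c: "c \<in> C"
  have "germ F P0 X (cl c) \<subseteq> {(X, cl c)}"
  proof clarify
    fix V y assume "(V, y) \<in> germ F P0 X (cl c)"
    then obtain W where W: "spec_open F V" "P0 \<in> V" "y \<in> sec F V" "spec_open F W" "P0 \<in> W"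
      "W \<subseteq> X \<inter> V" "res F W (cl c) = res F W y" unfolding germ_def by blast
    have VW: "V = X" "W = X" using open_X W(1,2) open_X W(4,5) by auto
    have "y \<in> cl ` C" using W(3) unfolding VW mult_set_X loc_car .
    then obtain d where d: "d \<in> C" "y = cl d" by blast
    show "V = X \<and> y = cl c" using VW W(7) d res_cl c by simp
  qed
  moreover have "(X, cl c) \<in> germ F P0 X (cl c)"
  proof -
    have "cl c \<in> sec F X" unfolding mult_set_X loc_car using c by blast
    moreover have "P0 \<in> X" by (simp add: X_def)
    ultimately show ?thesis unfolding germ_def using openX by auto
  qed
  ultimately show ?thesis by blast
qed

lemma gconst: "a \<in> C \<Longrightarrow> gamma_const F a = (\<lambda>P. if P = P0 then {(X, cl a)} else undefined)"
proof
  fix P assume a: "a \<in> C"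
  have "frac_cls F (mult_set F (spec_pts F)) a e = cl a" unfolding spec_pts_eq mult_set_X cl_def ..
  moreover have "P \<in> spec_pts F \<longleftrightarrow> P = P0" unfolding spec_pts_eq X_def by simp
  ultimately show "gamma_const F a P = (if P = P0 then {(X, cl a)} else undefined)"
    unfolding gamma_const_def using germ_cl[OF a] spec_pts_eq by auto
qed

lemma lsum: "a \<in> C \<Longrightarrow> b \<in> C \<Longrightarrow> loc_summable F S (cl a) (cl b) \<longleftrightarrow> sm a b"
proof
  assume ab: "a \<in> C" "b \<in> C"
  assume "loc_summable F S (cl a) (cl b)"
  then obtain a' b' u where u: "(a', u) \<in> cl a" "(b', u) \<in> cl b" "sm a' b'"
    unfolding loc_summable_def by blast
  hence u2: "u \<in> S" "a' = mu u a" "b' = mu u b" using cl_char ab by auto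
  obtain u' where u': "u' \<in> C" "mu u u' = e" using invS u2 by blast
  have "mu a' u' = a" using u2 u' ab SC massoc[of a u u'] mcomm[of u a] me by simp
  moreover have "mu b' u' = b" using u2 u' ab SC massoc[of b u u'] mcomm[of u b] me by simp
  ultimately show "sm a b" using distr[OF u(3) u'(1)] by simp
next
  assume ab: "a \<in> C" "b \<in> C" "sm a b"
  thus "loc_summable F S (cl a) (cl b)" unfolding loc_summable_def
    using loc_car clin by blast
qed

lemma ladd: "sm a b \<Longrightarrow> loc_add F S (cl a) (cl b) = cl (ad a b)"
proof -
  assume ab: "sm a b"
  hence C: "a \<in> C" "b \<in> C" "ad a b \<in> C" using smC by auto
  have "{frac_cls F S (ad a' b') u | a' b' u. (a', u) \<in> cl a \<and> (b', u) \<in> cl b \<and> sm a' b'}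
        = {cl (ad a b)}"
  proof
    show "{cl (ad a b)} \<subseteq> {frac_cls F S (ad a' b') u | a' b' u. (a', u) \<in> cl a \<and> (b', u) \<in> cl b \<and> sm a' b'}"
    proof -
      have "cl (ad a b) = frac_cls F S (ad a b) e" by (simp add: cl_def)
      thus ?thesis using clin[OF C(1)] clin[OF C(2)] ab by blast
    qed
    show "{frac_cls F S (ad a' b') u | a' b' u. (a', u) \<in> cl a \<and> (b', u) \<in> cl b \<and> sm a' b'} \<subseteq> {cl (ad a b)}"
    proof clarify
      fix a' b' u assume h: "(a', u) \<in> cl a" "(b', u) \<in> cl b" "sm a' b'"
      hence u2: "u \<in> S" "a' = mu u a" "b' = mu u b" using cl_char C by auto
      have "ad a' b' = mu u (ad a b)"
        using distr[OF ab SC[OF u2(1)]] u2 C SC[OF u2(1)] mcomm[of u a] mcomm[of u b] mcomm[of u "ad a b"] by simp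
      thus "frac_cls F S (ad a' b') u = cl (ad a b)" using fc_shift C u2 by simp
    qed
  qed
  thus ?thesis unfolding loc_add_def by simp
qed

lemma lmult: "a \<in> C \<Longrightarrow> b \<in> C \<Longrightarrow> loc_mult F S (cl a) (cl b) = cl (mu a b)"
proof -
  assume C: "a \<in> C" "b \<in> C"
  have "{frac_cls F S (mu a' b') (mu s t) | a' s b' t. (a', s) \<in> cl a \<and> (b', t) \<in> cl b}
        = {cl (mu a b)}"
  proof
    show "{cl (mu a b)} \<subseteq> {frac_cls F S (mu a' b') (mu s t) | a' s b' t. (a', s) \<in> cl a \<and> (b', t) \<in> cl b}"
    proof -
      have "mu e e = e" using me eC by blast
      hence "cl (mu a b) = frac_cls F S (mu a b) (mu e e)" by (simp add: cl_def)
      thus ?thesis using clin[OF C(1)] clin[OF C(2)] by blast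
    qed
    show "{frac_cls F S (mu a' b') (mu s t) | a' s b' t. (a', s) \<in> cl a \<and> (b', t) \<in> cl b} \<subseteq> {cl (mu a b)}"
    proof clarify
      fix a' b' s t assume h: "(a', s) \<in> cl a" "(b', t) \<in> cl b"
      hence u2: "s \<in> S" "a' = mu s a" "t \<in> S" "b' = mu t b" using cl_char C by auto
      have "mu a' b' = mu (mu s t) (mu a b)"
      proof -
        have sC: "s \<in> C" "t \<in> C" using u2 SC by auto
        have "mu (mu s a) (mu t b) = mu s (mu a (mu t b))" using massoc[of s a "mu t b"] sC C mC by simp
        also have "\<dots> = mu s (mu t (mu a b))" using lcomm[of a t b] sC C by simp
        also have "\<dots> = mu (mu s t) (mu a b)" using massoc[of s t "mu a b"] sC C mC by simp
        finally show ?thesis using u2 by simp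
      qed
      thus "frac_cls F S (mu a' b') (mu s t) = cl (mu a b)" using fc_shift C u2 mS mC by simp
    qed
  qed
  thus ?thesis unfolding loc_mult_def by simp
qed

lemma stalk_in: "c \<in> C \<Longrightarrow> {(X, cl c)} \<in> stalk F P0"
proof -
  assume c: "c \<in> C"
  have "cl c \<in> sec F X" unfolding mult_set_X loc_car using c by blast
  moreover have "P0 \<in> X" by (simp add: X_def)
  ultimately show ?thesis unfolding stalk_def using openX germ_cl[OF c, symmetric] by blast
qed

lemma gsum: "a \<in> C \<Longrightarrow> b \<in> C \<Longrightarrow> germ_summable F P0 {(X, cl a)} {(X, cl b)} \<longleftrightarrow> sm a b"
  unfolding germ_summable_def using stalk_in lsum openX mult_set_X by (auto simp: X_def)

lemma gadd: "sm a b \<Longrightarrow> germ_add F P0 {(X, cl a)} {(X, cl b)} = {(X, cl (ad a b))}"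
proof -
  assume ab: "sm a b"
  hence C: "a \<in> C" "b \<in> C" "ad a b \<in> C" using smC by auto
  have "{germ F P0 W (loc_add F (mult_set F W) x y) | W x y.
      spec_open F W \<and> P0 \<in> W \<and> (W, x) \<in> {(X, cl a)} \<and> (W, y) \<in> {(X, cl b)} \<and>
      loc_summable F (mult_set F W) x y} = {{(X, cl (ad a b))}}"
    using ab C openX lsum ladd germ_cl mult_set_X by (auto simp: X_def)
  thus ?thesis unfolding germ_add_def by simp
qed

lemma gmult: "a \<in> C \<Longrightarrow> b \<in> C \<Longrightarrow> germ_mult F P0 {(X, cl a)} {(X, cl b)} = {(X, cl (mu a b))}"
proof -
  assume C: "a \<in> C" "b \<in> C"
  have "{germ F P0 W (loc_mult F (mult_set F W) x y) | W x y.
      spec_open F W \<and> P0 \<in> W \<and> (W, x) \<in> {(X, cl a)} \<and> (W, y) \<in> {(X, cl b)}} = {{(X, cl (mu a b))}}"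
    using C openX lmult germ_cl mult_set_X mC by (auto simp: X_def)
  thus ?thesis unfolding germ_mult_def by simp
qed

lemma gcar: "gamma_carrier F = gamma_const F ` C"
proof
  show "gamma_const F ` C \<subseteq> gamma_carrier F"
  proof clarify
    fix a assume a: "a \<in> C"
    have s: "cl a \<in> sec F X" unfolding mult_set_X loc_car using a by blast
    have "\<forall>Q\<in>X. (if Q = P0 then {(X, cl a)} else undefined) = germ F Q X (cl a)"
      using germ_cl[OF a] by (simp add: X_def)
    moreover have "P0 \<in> X" by (simp add: X_def)
    ultimately have "\<exists>U x. spec_open F U \<and> P0 \<in> U \<and> x \<in> sec F U \<and>
        (\<forall>Q\<in>U. (if Q = P0 then {(X, cl a)} else undefined) = germ F Q U x)"
      using openX s by blast
    moreover have "\<forall>P. P \<notin> X \<longrightarrow> (if P = P0 then {(X, cl a)} else undefined) = undefined"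
      by (simp add: X_def)
    ultimately show "gamma_const F a \<in> gamma_carrier F" unfolding gamma_carrier_def gconst[OF a] spec_pts_eq
      by (simp add: X_def)
  qed
  show "gamma_carrier F \<subseteq> gamma_const F ` C"
  proof
    fix \<sigma> assume s: "\<sigma> \<in> gamma_carrier F"
    have s1: "\<forall>P. P \<notin> X \<longrightarrow> \<sigma> P = undefined"
      and s2: "\<forall>P\<in>X. \<exists>U x. spec_open F U \<and> P \<in> U \<and> x \<in> sec F U \<and> (\<forall>Q\<in>U. \<sigma> Q = germ F Q U x)"
      using s unfolding gamma_carrier_def spec_pts_eq by blast+
    have "P0 \<in> X" by (simp add: X_def)
    then obtain U x where U: "spec_open F U" "P0 \<in> U" "x \<in> sec F U" "\<forall>Q\<in>U. \<sigma> Q = germ F Q U x"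
      using s2 by blast
    have UX: "U = X" using open_X U(1,2) by blast
    have "x \<in> cl ` C" using U(3) unfolding UX mult_set_X loc_car .
    then obtain c where c: "c \<in> C" "x = cl c" by blast
    have "\<sigma> = gamma_const F c"
    proof
      fix P show "\<sigma> P = gamma_const F c P"
      proof (cases "P = P0")
        case True
        hence "\<sigma> P = germ F P0 X (cl c)" using U(4) U(2) UX c by simp
        thus ?thesis using germ_cl[OF c(1)] gconst[OF c(1)] True by simp
      next
        case False
        hence "P \<notin> X" by (simp add: X_def)
        thus ?thesis using s1 gconst[OF c(1)] False by simp
      qed
    qed
    thus "\<sigma> \<in> gamma_const F ` C" using c by blast
  qed
qed

lemma iso: "pring_iso F (Gamma_Spec F) (gamma_const F)"
proof -
  have inj: "inj_on (gamma_const F) C"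
  proof
    fix a b assume ab: "a \<in> C" "b \<in> C" "gamma_const F a = gamma_const F b"
    hence "gamma_const F a P0 = gamma_const F b P0" by simp
    hence "{(X, cl a)} = {(X, cl b)}" using gconst[OF ab(1)] gconst[OF ab(2)] by simp
    thus "a = b" using cl_inj ab by blast
  qed
  have sm: "psummable (Gamma_Spec F) (gamma_const F a) (gamma_const F b) = sm a b"
    if "a \<in> C" "b \<in> C" for a b
    using that gcar gsum gconst by (simp add: Gamma_Spec_def spec_pts_eq X_def)
  have inX: "P \<in> X \<longleftrightarrow> P = P0" for P by (simp add: X_def)
  have ad: "gamma_const F (ad a b) = padd (Gamma_Spec F) (gamma_const F a) (gamma_const F b)"
    if h: "sm a b" for a b
  proof
    fix P
    have C: "a \<in> C" "b \<in> C" "ad a b \<in> C" using smC[OF h] by auto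
    show "gamma_const F (ad a b) P = padd (Gamma_Spec F) (gamma_const F a) (gamma_const F b) P"
      unfolding gconst[OF C(1)] gconst[OF C(2)] gconst[OF C(3)]
      by (simp add: Gamma_Spec_def spec_pts_eq inX gadd[OF h])
  qed
  have mu: "gamma_const F (mu a b) = pmult (Gamma_Spec F) (gamma_const F a) (gamma_const F b)"
    if C: "a \<in> C" "b \<in> C" for a b
  proof
    fix P
    have C3: "mu a b \<in> C" using mC C by blast
    show "gamma_const F (mu a b) P = pmult (Gamma_Spec F) (gamma_const F a) (gamma_const F b) P"
      unfolding gconst[OF C(1)] gconst[OF C(2)] gconst[OF C3]
      by (simp add: Gamma_Spec_def spec_pts_eq inX gmult[OF C])
  qed
  show ?thesis unfolding pring_iso_def
    using inj gcar sm ad mu by (auto simp: bij_betw_def Gamma_Spec_def)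
qed

end

lemma (in pfld) iso_degen: "e = z \<Longrightarrow> pring_iso F (Gamma_Spec F) (gamma_const F)"
proof -
  assume ez: "e = z"
  hence Cz: "C = {z}" by (rule degen)
  have sp: "spec_pts F = {}"
  proof -
    have "\<not> prime_pideal F P" for P
    proof
      assume "prime_pideal F P"
      hence "P \<subseteq> C" "z \<in> P" "P \<noteq> C" unfolding prime_pideal_def pideal_def by auto
      thus False using Cz by auto
    qed
    thus ?thesis unfolding spec_pts_def by auto
  qed
  have gc: "gamma_const F a = (\<lambda>P. undefined)" for a
    unfolding gamma_const_def sp by simp
  have gcar: "gamma_carrier F = {\<lambda>P. undefined}"
    unfolding gamma_carrier_def sp by auto
  show ?thesis unfolding pring_iso_def
    using Cz gc gcar smz zC by (auto simp: bij_betw_def Gamma_Spec_def sp inj_on_def)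
qed

theorem mainTheorem13:
  fixes F :: "'a pring"
  assumes "partial_field F"
  shows "pring_isomorphic F (Gamma_Spec F)"
proof -
  interpret pfld F using assms by unfold_locales
  show ?thesis
  proof (cases "pone F = pzero F")
    case True thus ?thesis using iso_degen pring_isomorphic_def by blast
  next
    case False
    interpret pfld1 F using False by unfold_locales
    show ?thesis using iso pring_isomorphic_def by blast
  qed
qed

end
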